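(* Assume in addition that $\gcd(l,m)=1$ (so $k=lm$ and $\gcd(n,k)=1$). Then the unique numbers $u_r,v_r$ ($0\le r<k$) of the construction (i.e. those for which each $\mathcal A_r^t$ has slope $\alpha_{r+1}$ and each $\mathcal B_r^t$ has slope $-\beta_{r+1}$) are given by $$u_r=\frac{1}{\tau^n-1}\sum_{j=0}^{k-1}\Big(\alpha_{r+1+jn}\big(\psi_r^{jn+l}-\psi_r^{jn}\big)-\beta_{r+1+l+jn}\big(\psi_r^{(j+1)n}-\psi_r^{jn+l}\big)\Big),$$ $$v_r=\frac{1}{\tau^n-1}\sum_{j=0}^{k-1}\Big(\alpha_{r+1+m+jn}\big(\psi_r^{(j+1)n}-\psi_r^{jn+m}\big)-\beta_{r+1+jn}\big(\psi_r^{jn+m}-\psi_r^{jn}\big)\Big).$$ Equivalently, with $\chi_r=\psi_r^n$, $U_r=\alpha_{r+1}(\psi_r^l-1)-\beta_{r+l+1}(\psi_r^n-\psi_r^l)$ and $V_r=-\beta_{r+1}(\psi_r^m-1)+\alpha_{r+m+1}(\psi_r^n-\psi_r^m)$, they satisfy $u_r-\chi_ru_{r+n}=-U_r$, $v_r-\chi_rv_{r+n}=-V_r$, and $(\tau^n-1)u_r=\sum_{j=0}^{k-1}\psi_r^{jn}U_{r+jn}$, $(\tau^n-1)v_r=\sum_{j=0}^{k-1}\psi_r^{jn}V_{r+jn}$.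
   Context: Setting: $l,m$ positive integers, $n=l+m$, $k=\operatorname{lcm}(l,m)$, weights $\alpha_1,\dots,\alpha_l,\beta_1,\dots,\beta_m\ge0$ not all zero with $\sum\alpha_i=\sum\beta_j$, and $\rho_1,\dots,\rho_k>1$. Indexing conventions: for an integer $r$, $\alpha_r:=\alpha_i$ with $1\le i\le l$, $r\equiv i\pmod l$; $\beta_r:=\beta_j$ with $1\le j\le m$, $r\equiv j\pmod m$; $\rho_r:=\rho_h$ with $1\le h\le k$, $r\equiv h\pmod k$; $u_r,v_r$ are extended $k$-periodically in $r$. Set $\sigma_0=1$, $\sigma_r=\rho_1\cdots\rho_r$ ($1\le r\le k$), $\tau=\rho_1\cdots\rho_k$, and $\sigma_{sk+h}=\tau^s\sigma_h$ for $s\in\mathbb Z$, $0\le h<k$. For integers $r$ and $s\ge0$ let $\psi_r^s=\rho_{r+1}\rho_{r+2}\cdots\rho_{r+s}$ (with $\psi_r^0=1$). Points: ${\bf a}_r^t=\tau^t\sigma_r(1,u_r)$, ${\bf b}_r^t=\tau^t\sigma_r(1,v_r)$ for $r,t\in\mathbb Z$; segments $\mathcal A_r^t=[{\bf a}_r^t,{\bf b}_{r+l}^t]$, $\mathcal B_r^t=[{\bf b}_r^t,{\bf a}_{r+m}^t]$ for $0\le r<k$, $t\in\mathbb Z$. *)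

theory Defs
  imports Complex_Main
begin

text \<open>Periodic index extension: for a family given on indices 1..p, the value at an
  integer r is the value at the unique i in 1..p with r = i mod p.\<close>
definition idx1 :: "(nat \<Rightarrow> real) \<Rightarrow> nat \<Rightarrow> int \<Rightarrow> real" where
  "idx1 f p r = f (nat ((r - 1) mod int p) + 1)"

definition idx0 :: "(nat \<Rightarrow> real) \<Rightarrow> nat \<Rightarrow> int \<Rightarrow> real" where
  "idx0 f p r = f (nat (r mod int p))"

definition tauP :: "(nat \<Rightarrow> real) \<Rightarrow> nat \<Rightarrow> real" where
  "tauP rho k = (\<Prod>i=1..k. rho i)"

definition sigmaP :: "(nat \<Rightarrow> real) \<Rightarrow> nat \<Rightarrow> int \<Rightarrow> real" where
  "sigmaP rho k r = tauP rho k powi (r div int k) * (\<Prod>i=1..nat (r mod int k). rho i)"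

definition psiP :: "(nat \<Rightarrow> real) \<Rightarrow> nat \<Rightarrow> int \<Rightarrow> nat \<Rightarrow> real" where
  "psiP rho k r s = (\<Prod>i=1..s. idx1 rho k (r + int i))"

definition ptA :: "(nat \<Rightarrow> real) \<Rightarrow> nat \<Rightarrow> (nat \<Rightarrow> real) \<Rightarrow> int \<Rightarrow> int \<Rightarrow> real \<times> real" where
  "ptA rho k u r t = (tauP rho k powi t * sigmaP rho k r,
                      tauP rho k powi t * sigmaP rho k r * idx0 u k r)"

definition seg_slope :: "real \<times> real \<Rightarrow> real \<times> real \<Rightarrow> real" where
  "seg_slope p q = (snd q - snd p) / (fst q - fst p)"

end

theory Submission
  imports Defs
begin

lemma idx1_shift:
  assumes "p dvd k"
  shows "idx1 f p (x + int k) = idx1 f p x"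
proof -
  obtain c where k: "k = p * c" using assms by blast
  have "(x + int k - 1) mod int p = (x - 1) mod int p"
    unfolding k by (metis add.commute add_diff_eq mod_mult_self2 of_nat_mult mult.commute)
  thus ?thesis unfolding idx1_def by simp
qed

lemma idx0_shift: "idx0 f k (x + int k) = idx0 f k x"
  unfolding idx0_def by simp

lemma idx1_gt1:
  assumes "0 < k" "\<forall>h\<in>{1..k}. rho h > (1::real)"
  shows "idx1 rho k x > 1"
proof -
  have "0 \<le> (x - 1) mod int k" "(x - 1) mod int k < int k" using assms(1) by auto
  hence "nat ((x - 1) mod int k) + 1 \<in> {1..k}" by auto
  thus ?thesis using assms(2) unfolding idx1_def by blast
qed

lemma psi_Suc: "psiP rho k r (Suc s) = psiP rho k r s * idx1 rho k (r + int (Suc s))"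
  unfolding psiP_def by (simp add: prod.nat_ivl_Suc' mult.commute)

lemma psi_0[simp]: "psiP rho k r 0 = 1"
  unfolding psiP_def by simp

lemma psi_add: "psiP rho k r (a + b) = psiP rho k r a * psiP rho k (r + int a) b"
proof (induction b)
  case 0 then show ?case by simp
next
  case (Suc b)
  have "psiP rho k r (a + Suc b) = psiP rho k r (a + b) * idx1 rho k (r + int (Suc (a+b)))"
    using psi_Suc[of rho k r "a+b"] by simp
  also have "\<dots> = psiP rho k r a * (psiP rho k (r + int a) b * idx1 rho k (r + int a + int (Suc b)))"
    using Suc by (simp add: algebra_simps)
  also have "\<dots> = psiP rho k r a * psiP rho k (r + int a) (Suc b)"
    using psi_Suc[of rho k "r + int a" b] by simp
  finally show ?case .
qed

lemma psi_ge1: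
  assumes "0 < k" "\<forall>h\<in>{1..k}. rho h > (1::real)"
  shows "psiP rho k r s \<ge> 1"
  unfolding psiP_def using idx1_gt1[OF assms] by (intro prod_ge_1) (auto intro: less_imp_le)

lemma psi_gt1:
  assumes "0 < k" "\<forall>h\<in>{1..k}. rho h > (1::real)" "0 < s"
  shows "psiP rho k r s > 1"
proof -
  obtain s' where s: "s = Suc s'" using assms(3) by (cases s) auto
  have "psiP rho k r s' \<ge> 1" by (rule psi_ge1[OF assms(1,2)])
  moreover have "idx1 rho k (r + int (Suc s')) > 1" by (rule idx1_gt1[OF assms(1,2)])
  ultimately show ?thesis unfolding s psi_Suc
    using mult_right_mono[of 1 "psiP rho k r s'" "idx1 rho k (r + int (Suc s'))"] by linarith
qed

lemma psi_period: "psiP rho k (r + int k) s = psiP rho k r s"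
  unfolding psiP_def
proof (rule prod.cong)
  fix i assume "i \<in> {1..s}"
  show "idx1 rho k (r + int k + int i) = idx1 rho k (r + int i)"
    using idx1_shift[of k k rho "r + int i"] by (simp add: algebra_simps)
qed simp

lemma psi_0k: "0 < k \<Longrightarrow> psiP rho k 0 k = tauP rho k"
  unfolding psiP_def tauP_def
proof (rule prod.cong)
  fix i assume "0 < k" "i \<in> {1..k}"
  hence "(int i - 1) mod int k = int i - 1" by auto
  moreover have "Suc (nat (int i - 1)) = i" using \<open>i \<in> {1..k}\<close> by auto
  ultimately show "idx1 rho k (0 + int i) = rho i" unfolding idx1_def by simp
qed simp

lemma psi_k:
  assumes "0 < k" "\<forall>h\<in>{1..k}. rho h > (1::real)"
  shows "psiP rho k r k = tauP rho k"
proof -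
  have step: "psiP rho k (r + 1) k = psiP rho k r k" for r
  proof -
    have "psiP rho k r (k + 1) = psiP rho k r k * psiP rho k (r + int k) 1" by (rule psi_add)
    moreover have "psiP rho k r (1 + k) = psiP rho k r 1 * psiP rho k (r + 1) k"
      using psi_add[of rho k r 1 k] by simp
    moreover have "psiP rho k (r + int k) 1 = psiP rho k r 1" by (rule psi_period)
    moreover have "psiP rho k r 1 > 0" using psi_ge1[OF assms, of r 1] by simp
    ultimately show ?thesis by (simp add: add.commute mult.commute)
  qed
  have "psiP rho k r k = psiP rho k 0 k"
  proof (induction r rule: int_induct[where k=0])
    case base then show ?case by simp
  next
    case (step1 i) then show ?case using step[of i] by simp
  next
    case (step2 i) then show ?case using step[of "i - 1"] by simp
  qed
  thus ?thesis using psi_0k[OF assms(1)] by simp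
qed

lemma psi_kj:
  assumes "0 < k" "\<forall>h\<in>{1..k}. rho h > (1::real)"
  shows "psiP rho k r (k * j) = tauP rho k ^ j"
proof (induction j)
  case 0 then show ?case by simp
next
  case (Suc j)
  have "psiP rho k r (k * Suc j) = psiP rho k r (k * j) * psiP rho k (r + int (k*j)) k"
    using psi_add[of rho k r "k*j" k] by (simp add: add.commute)
  then show ?case using Suc psi_k[OF assms] by simp
qed


lemma tau_gt1:
  assumes "0 < k" "\<forall>h\<in>{1..k}. rho h > (1::real)"
  shows "tauP rho k > 1"
  using psi_gt1[OF assms, of k 0] psi_k[OF assms, of 0] assms(1) by simp

lemma sigma_Suc:
  assumes "0 < k" "\<forall>h\<in>{1..k}. rho h > (1::real)"
  shows "sigmaP rho k (r + 1) = sigmaP rho k r * idx1 rho k (r + 1)"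
proof -
  define q h where "q = r div int k" and "h = r mod int k"
  have r: "r = q * int k + h" unfolding q_def h_def by simp
  have h: "0 \<le> h" "h < int k" unfolding h_def using assms(1) by auto
  have tau0: "tauP rho k \<noteq> 0" using tau_gt1[OF assms] by simp
  have rr: "idx1 rho k (r + 1) = rho (Suc (nat h))" unfolding idx1_def h_def by simp
  show ?thesis
  proof (cases "h + 1 < int k")
    case True
    have "(r + 1) div int k = q" "(r + 1) mod int k = h + 1"
      using True h unfolding r by (simp_all add: add.assoc)
    moreover have "nat (h + 1) = Suc (nat h)" using h by simp
    ultimately show ?thesis unfolding sigmaP_def rr
      by (simp add: h_def q_def mult.assoc)
  next
    case False
    hence hk: "h + 1 = int k" using h by simp
    have "(r + 1) div int k = q + 1" "(r + 1) mod int k = 0"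
      using hk assms(1) unfolding r by (simp_all add: add.assoc)
    moreover have "Suc (nat h) = k"
    proof -
      have "nat (h + 1) = k" using hk by simp
      moreover have "nat (h + 1) = Suc (nat h)" using h by simp
      ultimately show ?thesis by simp
    qed
    moreover have "(\<Prod>i=1..nat h. rho i) * rho k = tauP rho k"
      unfolding tauP_def using \<open>Suc (nat h) = k\<close>[symmetric]
      by (simp add: prod.nat_ivl_Suc' mult.commute)
    ultimately show ?thesis unfolding sigmaP_def rr
      using tau0 by (simp add: h_def q_def power_int_add mult.assoc)
  qed
qed

lemma sigma_add:
  assumes "0 < k" "\<forall>h\<in>{1..k}. rho h > (1::real)"
  shows "sigmaP rho k (r + int s) = sigmaP rho k r * psiP rho k r s"
proof (induction s)
  case 0 then show ?case by simp
next
  case (Suc s)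
  have "sigmaP rho k (r + int (Suc s)) = sigmaP rho k (r + int s + 1)" by (simp add: algebra_simps)
  also have "\<dots> = sigmaP rho k (r + int s) * idx1 rho k (r + int s + 1)"
    by (rule sigma_Suc[OF assms])
  also have "\<dots> = sigmaP rho k r * psiP rho k r (Suc s)"
    using Suc by (simp add: psi_Suc algebra_simps)
  finally show ?case .
qed

lemma sigma_pos:
  assumes "0 < k" "\<forall>h\<in>{1..k}. rho h > (1::real)"
  shows "sigmaP rho k r > 0"
proof -
  have "tauP rho k > 0" using tau_gt1[OF assms] by simp
  moreover have "(\<Prod>i=1..nat (r mod int k). rho i) > 0"
  proof (rule prod_pos)
    fix i assume "i \<in> {1..nat (r mod int k)}"
    moreover have "r mod int k < int k" using assms(1) by simp
    ultimately have "i \<in> {1..k}" by auto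
    thus "0 < rho i" using assms(2) by force
  qed
  ultimately show ?thesis unfolding sigmaP_def by simp
qed

lemma slope_eq:
  assumes "0 < k" "\<forall>h\<in>{1..k}. rho h > (1::real)" "0 < s"
  shows "seg_slope (ptA rho k u r t) (ptA rho k v (r + int s) t) = c \<longleftrightarrow>
         psiP rho k r s * idx0 v k (r + int s) - idx0 u k r = c * (psiP rho k r s - 1)"
proof -
  define T where "T = tauP rho k powi t"
  define S where "S = sigmaP rho k r"
  define P where "P = psiP rho k r s"
  have T: "T \<noteq> 0" unfolding T_def using tau_gt1[OF assms(1,2)] by simp
  have S: "S \<noteq> 0" unfolding S_def using sigma_pos[OF assms(1,2)] by (metis less_irrefl)
  have P: "P - 1 \<noteq> 0" unfolding P_def using psi_gt1[OF assms, of r] by simp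
  have e: "sigmaP rho k (r + int s) = S * P" unfolding S_def P_def by (rule sigma_add[OF assms(1,2)])
  have "seg_slope (ptA rho k u r t) (ptA rho k v (r + int s) t)
        = (T * (S * P) * idx0 v k (r + int s) - T * S * idx0 u k r) / (T * (S * P) - T * S)"
    unfolding seg_slope_def ptA_def e T_def S_def by simp
  also have "\<dots> = (P * idx0 v k (r + int s) - idx0 u k r) / (P - 1)"
  proof -
    have "T * (S * P) * idx0 v k (r + int s) - T * S * idx0 u k r = (T*S) * (P * idx0 v k (r + int s) - idx0 u k r)"
      by (simp add: algebra_simps)
    moreover have "T * (S * P) - T * S = (T*S) * (P - 1)" by (simp add: algebra_simps)
    ultimately show ?thesis using T S by simp
  qed
  finally show ?thesis using P unfolding P_def by (simp add: divide_eq_eq)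
qed


lemma periodic_mult:
  assumes "\<And>r. P (r + int k) = P r"
  shows "P (r + int k * q) = P r"
proof (induction q rule: int_induct[where k=0])
  case base then show ?case by simp
next
  case (step1 i)
  have "P (r + int k * (i + 1)) = P (r + int k * i + int k)" by (simp add: algebra_simps)
  then show ?case using assms step1 by simp
next
  case (step2 i)
  have "P (r + int k * i) = P (r + int k * (i - 1) + int k)" by (simp add: algebra_simps)
  then show ?case using assms step2 by simp
qed

lemma periodic_mod:
  assumes "\<And>r. P (r + int k) = P r"
  shows "P r = P (r mod int k)"
  using periodic_mult[of P k "r mod int k" "r div int k", OF assms]
  by (simp add: mult.commute)

lemma iter_rec:
  assumes rec: "\<And>r. f r - psiP rho k r n * f (r + int n) = - g r"
  shows "f r = psiP rho k r (j*n) * f (r + int (j*n)) - (\<Sum>i<j. psiP rho k r (i*n) * g (r + int (i*n)))"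
proof (induction j)
  case 0 then show ?case by simp
next
  case (Suc j)
  have a: "f (r + int (j*n)) = psiP rho k (r + int (j*n)) n * f (r + int (j*n) + int n) - g (r + int (j*n))"
    using rec[of "r + int (j*n)"] by simp
  have b: "psiP rho k r (j*n) * psiP rho k (r + int (j*n)) n = psiP rho k r (Suc j * n)"
    using psi_add[of rho k r "j*n" n] by (simp add: add.commute)
  have c: "r + int (j*n) + int n = r + int (Suc j * n)" by simp
  have "f r = psiP rho k r (j*n) * (psiP rho k (r + int (j*n)) n * f (r + int (j*n) + int n) - g (r + int (j*n)))
         - (\<Sum>i<j. psiP rho k r (i*n) * g (r + int (i*n)))"
    using Suc a by simp
  also have "\<dots> = (psiP rho k r (j*n) * psiP rho k (r + int (j*n)) n) * f (r + int (j*n) + int n)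
         - ((\<Sum>i<j. psiP rho k r (i*n) * g (r + int (i*n))) + psiP rho k r (j*n) * g (r + int (j*n)))"
    by (simp add: algebra_simps)
  also have "\<dots> = psiP rho k r (Suc j * n) * f (r + int (Suc j * n))
         - (\<Sum>i<Suc j. psiP rho k r (i*n) * g (r + int (i*n)))"
    unfolding b c by simp
  finally show ?case .
qed

lemma sum_form:
  assumes "0 < k" "\<forall>h\<in>{1..k}. rho h > (1::real)"
    and rec: "\<And>r. f r - psiP rho k r n * f (r + int n) = - g r"
    and per: "\<And>r. f (r + int k) = f r"
  shows "(tauP rho k ^ n - 1) * f r = (\<Sum>j=0..<k. psiP rho k r (j*n) * g (r + int (j*n)))"
proof -
  have "f r = psiP rho k r (k*n) * f (r + int (k*n)) - (\<Sum>i<k. psiP rho k r (i*n) * g (r + int (i*n)))"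
    by (rule iter_rec[OF rec])
  moreover have "f (r + int (k*n)) = f r"
    using periodic_mult[of f k r "int n", OF per] by simp
  moreover have "psiP rho k r (k*n) = tauP rho k ^ n" by (rule psi_kj[OF assms(1,2)])
  ultimately show ?thesis by (simp add: atLeast0LessThan algebra_simps)
qed

lemma conv_form:
  assumes "0 < k" "\<forall>h\<in>{1..k}. rho h > (1::real)" "0 < n"
    and sf: "\<And>r. (tauP rho k ^ n - 1) * f r = (\<Sum>j=0..<k. psiP rho k r (j*n) * g (r + int (j*n)))"
    and per: "\<And>r. g (r + int k) = g r"
  shows "f r - psiP rho k r n * f (r + int n) = - g r"
proof -
  define T where "T = tauP rho k ^ n"
  define h where "h j = psiP rho k r (j*n) * g (r + int (j*n))" for j
  have T1: "T - 1 \<noteq> 0" unfolding T_def using one_less_power[OF tau_gt1[OF assms(1,2)] assms(3)]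
    by simp
  have "psiP rho k r n * (\<Sum>j=0..<k. psiP rho k (r + int n) (j*n) * g (r + int n + int (j*n)))
        = (\<Sum>j<k. h (Suc j))"
    unfolding sum_distrib_left atLeast0LessThan h_def
  proof (rule sum.cong)
    fix j
    have "psiP rho k r (n + j*n) = psiP rho k r n * psiP rho k (r + int n) (j*n)" by (rule psi_add)
    thus "psiP rho k r n * (psiP rho k (r + int n) (j * n) * g (r + int n + int (j * n))) =
          psiP rho k r (Suc j * n) * g (r + int (Suc j * n))"
      by (simp add: algebra_simps)
  qed simp
  also have "\<dots> = (\<Sum>j<k. h j) + h k - h 0"
    using sum.lessThan_Suc_shift[of h k] sum.lessThan_Suc[of h k] by simp
  also have "h k = T * g r"
  proof -
    have "g (r + int (k*n)) = g r" using periodic_mult[of g k r "int n", OF per] by simp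
    thus ?thesis unfolding h_def T_def using psi_kj[OF assms(1,2)] by simp
  qed
  also have "h 0 = g r" unfolding h_def by simp
  finally have e: "psiP rho k r n * ((T - 1) * f (r + int n)) = (\<Sum>j<k. h j) + T * g r - g r"
    using sf[of "r + int n"] unfolding T_def by simp
  have "(T - 1) * f r = (\<Sum>j<k. h j)" using sf[of r] unfolding T_def h_def by (simp add: atLeast0LessThan)
  with e have "(T - 1) * (f r - psiP rho k r n * f (r + int n)) = (T - 1) * (- g r)"
    by (simp add: algebra_simps)
  hence "(T - 1) * (f r - psiP rho k r n * f (r + int n)) = (T - 1) * (- g r)" by simp
  thus ?thesis using T1 mult_left_cancel by blast
qed

lemma zero_from_pair:
  assumes "0 < k" "\<forall>h\<in>{1..k}. rho h > (1::real)" "0 < l + m"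
    and e1: "\<And>r. e r + psiP rho k r l * f (r + int l) = 0"
    and e2: "\<And>r. f r + psiP rho k r m * e (r + int m) = 0"
    and per: "\<And>r. e (r + int k) = e r"
  shows "e r = 0 \<and> f r = 0"
proof -
  have rec: "e r - psiP rho k r (l+m) * e (r + int (l+m)) = - 0" for r
  proof -
    have "f (r + int l) = - psiP rho k (r + int l) m * e (r + int l + int m)" using e2[of "r + int l"] by simp
    moreover have "psiP rho k r (l+m) = psiP rho k r l * psiP rho k (r + int l) m" by (rule psi_add)
    ultimately show ?thesis using e1[of r] by (simp add: algebra_simps)
  qed
  have ez: "e x = 0" for x
  proof -
    have "(tauP rho k ^ (l+m) - 1) * e x = (\<Sum>j=0..<k. psiP rho k x (j*(l+m)) * 0)"
      by (rule sum_form[OF assms(1,2) rec per])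
    moreover have "tauP rho k ^ (l+m) - 1 \<noteq> 0"
      using one_less_power[OF tau_gt1[OF assms(1,2)] assms(3)] by simp
    ultimately show ?thesis by simp
  qed
  have "psiP rho k (r - int l) l * f r = 0" using e1[of "r - int l"] ez by simp
  moreover have "psiP rho k (r - int l) l \<ge> 1" by (rule psi_ge1[OF assms(1,2)])
  ultimately show ?thesis using ez by simp
qed

theorem mainTheorem2:
  fixes l m :: nat
    and alpha beta rho u v :: "nat \<Rightarrow> real"
  assumes "0 < l" and "0 < m" and "coprime l m"
    and "\<forall>i\<in>{1..l}. alpha i \<ge> 0" and "\<forall>j\<in>{1..m}. beta j \<ge> 0"
    and "(\<exists>i\<in>{1..l}. alpha i \<noteq> 0) \<or> (\<exists>j\<in>{1..m}. beta j \<noteq> 0)"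
    and "(\<Sum>i=1..l. alpha i) = (\<Sum>j=1..m. beta j)"
    and "\<forall>h\<in>{1..lcm l m}. rho h > 1"
  shows
   "let n = l + m; k = lcm l m; \<tau> = tauP rho k;
        \<alpha> = idx1 alpha l; \<beta> = idx1 beta m; \<psi> = psiP rho k;
        uu = idx0 u k; vv = idx0 v k;
        a = ptA rho k u; b = ptA rho k v;
        conds = (\<forall>r\<in>{0..<int k}. \<forall>t::int.
                   seg_slope (a r t) (b (r + int l) t) = \<alpha> (r + 1) \<and>
                   seg_slope (b r t) (a (r + int m) t) = - \<beta> (r + 1));
        Uf = (\<lambda>r. (1 / (\<tau> ^ n - 1)) * (\<Sum>j=0..<k.
                 \<alpha> (r + 1 + int (j * n)) * (\<psi> r (j * n + l) - \<psi> r (j * n))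
               - \<beta> (r + 1 + int l + int (j * n)) * (\<psi> r ((j + 1) * n) - \<psi> r (j * n + l))));
        Vf = (\<lambda>r. (1 / (\<tau> ^ n - 1)) * (\<Sum>j=0..<k.
                 \<alpha> (r + 1 + int m + int (j * n)) * (\<psi> r ((j + 1) * n) - \<psi> r (j * n + m))
               - \<beta> (r + 1 + int (j * n)) * (\<psi> r (j * n + m) - \<psi> r (j * n))));
        \<chi> = (\<lambda>r. \<psi> r n);
        U = (\<lambda>r. \<alpha> (r + 1) * (\<psi> r l - 1) - \<beta> (r + int l + 1) * (\<psi> r n - \<psi> r l));
        V = (\<lambda>r. - \<beta> (r + 1) * (\<psi> r m - 1) + \<alpha> (r + int m + 1) * (\<psi> r n - \<psi> r m))
    in (conds \<longleftrightarrow> (\<forall>r\<in>{0..<int k}. uu r = Uf r \<and> vv r = Vf r)) \<and>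
       (conds \<longrightarrow> (\<forall>r::int.
            uu r - \<chi> r * uu (r + int n) = - U r \<and>
            vv r - \<chi> r * vv (r + int n) = - V r \<and>
            (\<tau> ^ n - 1) * uu r = (\<Sum>j=0..<k. \<psi> r (j * n) * U (r + int (j * n))) \<and>
            (\<tau> ^ n - 1) * vv r = (\<Sum>j=0..<k. \<psi> r (j * n) * V (r + int (j * n)))))"
proof -
  define n where "n = l + m"
  define k where "k = lcm l m"
  have k0: "0 < k" using assms(1,2) by (simp add: k_def lcm_pos_nat)
  have rh: "\<forall>h\<in>{1..k}. rho h > (1::real)" using assms(8) k_def by simp
  have n0: "0 < n" using assms(1) n_def by simp
  have lk: "l dvd k" and mk: "m dvd k" unfolding k_def by simp_all
  define al where "al = idx1 alpha l"
  define be where "be = idx1 beta m"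
  define uu where "uu = idx0 u k"
  define vv where "vv = idx0 v k"
  define ps where "ps = psiP rho k"
  define T where "T = tauP rho k"
  define U where "U r = al (r + 1) * (ps r l - 1) - be (r + int l + 1) * (ps r n - ps r l)" for r
  define V where "V r = - be (r + 1) * (ps r m - 1) + al (r + int m + 1) * (ps r n - ps r m)" for r
  define e where "e r = ps r l * vv (r + int l) - uu r - al (r + 1) * (ps r l - 1)" for r
  define f where "f r = ps r m * uu (r + int m) - vv r - (- be (r + 1)) * (ps r m - 1)" for r
  define SU where "SU r = (\<Sum>j=0..<k. ps r (j * n) * U (r + int (j * n)))" for r
  define SV where "SV r = (\<Sum>j=0..<k. ps r (j * n) * V (r + int (j * n)))" for r
  define Uf where "Uf r = (1 / (T ^ n - 1)) * (\<Sum>j=0..<k.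
                 al (r + 1 + int (j * n)) * (ps r (j * n + l) - ps r (j * n))
               - be (r + 1 + int l + int (j * n)) * (ps r ((j + 1) * n) - ps r (j * n + l)))" for r
  define Vf where "Vf r = (1 / (T ^ n - 1)) * (\<Sum>j=0..<k.
                 al (r + 1 + int m + int (j * n)) * (ps r ((j + 1) * n) - ps r (j * n + m))
               - be (r + 1 + int (j * n)) * (ps r (j * n + m) - ps r (j * n)))" for r
  define conds where "conds = (\<forall>r\<in>{0..<int k}. \<forall>t::int.
                   seg_slope (ptA rho k u r t) (ptA rho k v (r + int l) t) = al (r + 1) \<and>
                   seg_slope (ptA rho k v r t) (ptA rho k u (r + int m) t) = - be (r + 1))"
  define P where "P = (\<forall>r. e r = 0 \<and> f r = 0)"
  have Tn: "T ^ n - 1 \<noteq> 0" unfolding T_def using one_less_power[OF tau_gt1[OF k0 rh] n0] by simp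
  have per_al: "al (x + int k) = al x" for x unfolding al_def by (rule idx1_shift[OF lk])
  have per_be: "be (x + int k) = be x" for x unfolding be_def by (rule idx1_shift[OF mk])
  have per_uu: "uu (x + int k) = uu x" for x unfolding uu_def by (rule idx0_shift)
  have per_vv: "vv (x + int k) = vv x" for x unfolding vv_def by (rule idx0_shift)
  have per_ps: "ps (x + int k) s = ps x s" for x s unfolding ps_def by (rule psi_period)
  have psadd: "ps x (a + b) = ps x a * ps (x + int a) b" for x a b unfolding ps_def by (rule psi_add)
  have per_U: "U (x + int k) = U x" for x
    unfolding U_def using per_al[of "x + 1"] per_be[of "x + int l + 1"] per_ps[of x]
    by (simp add: algebra_simps)
  have per_V: "V (x + int k) = V x" for x
    unfolding V_def using per_be[of "x + 1"] per_al[of "x + int m + 1"] per_ps[of x]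
    by (simp add: algebra_simps)
  have per_e: "e (x + int k) = e x" for x
    unfolding e_def using per_al[of "x + 1"] per_vv[of "x + int l"] per_uu[of x] per_ps[of x]
    by (simp add: algebra_simps)
  have per_f: "f (x + int k) = f x" for x
    unfolding f_def using per_be[of "x + 1"] per_uu[of "x + int m"] per_vv[of x] per_ps[of x]
    by (simp add: algebra_simps)
  have id1: "e r + ps r l * f (r + int l) = ps r n * uu (r + int n) - uu r - U r" for r
  proof -
    have "ps r n = ps r l * ps (r + int l) m" unfolding n_def by (rule psadd)
    moreover have "r + int l + int m = r + int n" unfolding n_def by simp
    ultimately show ?thesis unfolding e_def f_def U_def by (simp add: algebra_simps)
  qed
  have id2: "f r + ps r m * e (r + int m) = ps r n * vv (r + int n) - vv r - V r" for r
  proof -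
    have "ps r n = ps r m * ps (r + int m) l" unfolding n_def using psadd[of r m l] by (simp add: add.commute)
    moreover have "r + int m + int l = r + int n" unfolding n_def by simp
    ultimately show ?thesis unfolding e_def f_def V_def by (simp add: algebra_simps)
  qed
  have C1: "conds \<longleftrightarrow> P"
  proof -
    have s1: "seg_slope (ptA rho k u r t) (ptA rho k v (r + int l) t) = al (r + 1) \<longleftrightarrow> e r = 0" for r t
      using slope_eq[OF k0 rh assms(1), of u r t v "al (r + 1)"] unfolding e_def ps_def uu_def vv_def
      by simp
    have s2: "seg_slope (ptA rho k v r t) (ptA rho k u (r + int m) t) = - be (r + 1) \<longleftrightarrow> f r = 0" for r t
      using slope_eq[OF k0 rh assms(2), of v r t u "- be (r + 1)"] unfolding f_def ps_def uu_def vv_def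
      by (simp add: eq_neg_iff_add_eq_0)
    have "conds \<longleftrightarrow> (\<forall>r\<in>{0..<int k}. e r = 0 \<and> f r = 0)" unfolding conds_def s1 s2 by simp
    also have "\<dots> \<longleftrightarrow> P"
    proof
      assume H: "\<forall>r\<in>{0..<int k}. e r = 0 \<and> f r = 0"
      show P unfolding P_def
      proof
        fix r
        have "(e r = 0 \<and> f r = 0) = (e (r mod int k) = 0 \<and> f (r mod int k) = 0)"
          by (rule periodic_mod[of "\<lambda>r. e r = 0 \<and> f r = 0"]) (simp add: per_e per_f)
        moreover have "r mod int k \<in> {0..<int k}" using k0 by simp
        ultimately show "e r = 0 \<and> f r = 0" using H by blast
      qed
    qed (simp add: P_def)
    finally show ?thesis .
  qed
  have recs: "uu r - ps r n * uu (r + int n) = - U r \<and> vv r - ps r n * vv (r + int n) = - V r"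
    if "P" for r
    using id1[of r] id2[of r] that unfolding P_def by (simp add: algebra_simps)
  have sums: "(T ^ n - 1) * uu r = SU r \<and> (T ^ n - 1) * vv r = SV r" if "P" for r
  proof -
    have "(T ^ n - 1) * uu r = SU r" unfolding T_def SU_def ps_def
      by (rule sum_form[OF k0 rh]) (use recs[OF that] per_uu in \<open>simp_all add: ps_def\<close>)
    moreover have "(T ^ n - 1) * vv r = SV r" unfolding T_def SV_def ps_def
      by (rule sum_form[OF k0 rh]) (use recs[OF that] per_vv in \<open>simp_all add: ps_def\<close>)
    ultimately show ?thesis by simp
  qed
  have Uf_eq: "Uf r = SU r / (T ^ n - 1)" for r
  proof -
    have "(\<Sum>j=0..<k.
                 al (r + 1 + int (j * n)) * (ps r (j * n + l) - ps r (j * n))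
               - be (r + 1 + int l + int (j * n)) * (ps r ((j + 1) * n) - ps r (j * n + l))) = SU r"
      unfolding SU_def
    proof (rule sum.cong)
      fix j
      have a: "ps r (j * n + l) = ps r (j*n) * ps (r + int (j*n)) l" by (rule psadd)
      have b: "ps r ((j + 1) * n) = ps r (j*n) * ps (r + int (j*n)) n" using psadd[of r "j*n" n] by (simp add: add.commute)
      show "al (r + 1 + int (j * n)) * (ps r (j * n + l) - ps r (j * n))
               - be (r + 1 + int l + int (j * n)) * (ps r ((j + 1) * n) - ps r (j * n + l))
            = ps r (j * n) * U (r + int (j * n))"
        unfolding a b U_def by (simp add: algebra_simps)
    qed simp
    thus ?thesis unfolding Uf_def by simp
  qed
  have Vf_eq: "Vf r = SV r / (T ^ n - 1)" for r
  proof -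
    have "(\<Sum>j=0..<k.
                 al (r + 1 + int m + int (j * n)) * (ps r ((j + 1) * n) - ps r (j * n + m))
               - be (r + 1 + int (j * n)) * (ps r (j * n + m) - ps r (j * n))) = SV r"
      unfolding SV_def
    proof (rule sum.cong)
      fix j
      have a: "ps r (j * n + m) = ps r (j*n) * ps (r + int (j*n)) m" by (rule psadd)
      have b: "ps r ((j + 1) * n) = ps r (j*n) * ps (r + int (j*n)) n" using psadd[of r "j*n" n] by (simp add: add.commute)
      show "al (r + 1 + int m + int (j * n)) * (ps r ((j + 1) * n) - ps r (j * n + m))
               - be (r + 1 + int (j * n)) * (ps r (j * n + m) - ps r (j * n))
            = ps r (j * n) * V (r + int (j * n))"
        unfolding a b V_def by (simp add: algebra_simps)
    qed simp
    thus ?thesis unfolding Vf_def by simp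
  qed
  have eqU: "uu r = Uf r \<longleftrightarrow> (T ^ n - 1) * uu r = SU r" for r
    unfolding Uf_eq using Tn by (auto simp: field_simps)
  have eqV: "vv r = Vf r \<longleftrightarrow> (T ^ n - 1) * vv r = SV r" for r
    unfolding Vf_eq using Tn by (auto simp: field_simps)
  have per_SU: "SU (x + int k) = SU x" for x
    unfolding SU_def
    by (rule sum.cong) (use per_ps per_U[of "x + int (_ * n)"] in \<open>simp_all add: algebra_simps\<close>)
  have per_SV: "SV (x + int k) = SV x" for x
    unfolding SV_def
    by (rule sum.cong) (use per_ps per_V[of "x + int (_ * n)"] in \<open>simp_all add: algebra_simps\<close>)
  have C2: "(\<forall>r\<in>{0..<int k}. uu r = Uf r \<and> vv r = Vf r) \<longleftrightarrow> P"
  proof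
    assume P then show "\<forall>r\<in>{0..<int k}. uu r = Uf r \<and> vv r = Vf r"
      using sums eqU eqV by blast
  next
    assume H: "\<forall>r\<in>{0..<int k}. uu r = Uf r \<and> vv r = Vf r"
    have Q: "(T ^ n - 1) * uu r = SU r \<and> (T ^ n - 1) * vv r = SV r" for r
    proof -
      have "((T ^ n - 1) * uu r = SU r \<and> (T ^ n - 1) * vv r = SV r) =
            ((T ^ n - 1) * uu (r mod int k) = SU (r mod int k) \<and> (T ^ n - 1) * vv (r mod int k) = SV (r mod int k))"
        by (rule periodic_mod[of "\<lambda>r. (T ^ n - 1) * uu r = SU r \<and> (T ^ n - 1) * vv r = SV r"])
          (simp add: per_uu per_vv per_SU per_SV)
      moreover have "r mod int k \<in> {0..<int k}" using k0 by simp
      ultimately show ?thesis using H eqU eqV by blast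
    qed
    have ru: "uu r - ps r n * uu (r + int n) = - U r" for r
      unfolding ps_def
      by (rule conv_form[OF k0 rh n0]) (use Q per_U in \<open>simp_all add: SU_def T_def ps_def\<close>)
    have rv: "vv r - ps r n * vv (r + int n) = - V r" for r
      unfolding ps_def
      by (rule conv_form[OF k0 rh n0]) (use Q per_V in \<open>simp_all add: SV_def T_def ps_def\<close>)
    have z: "e r = 0 \<and> f r = 0" for r
    proof (rule zero_from_pair[where l=l and m=m, OF k0 rh])
      show "0 < l + m" using n0 n_def by simp
      show "e x + psiP rho k x l * f (x + int l) = 0" for x using id1[of x] ru[of x] unfolding ps_def by simp
      show "f x + psiP rho k x m * e (x + int m) = 0" for x using id2[of x] rv[of x] unfolding ps_def by simp
      show "e (x + int k) = e x" for x by (rule per_e)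
    qed
    show P unfolding P_def using z by blast
  qed
  have main: "(conds \<longleftrightarrow> (\<forall>r\<in>{0..<int k}. uu r = Uf r \<and> vv r = Vf r)) \<and>
       (conds \<longrightarrow> (\<forall>r::int.
            uu r - ps r n * uu (r + int n) = - U r \<and>
            vv r - ps r n * vv (r + int n) = - V r \<and>
            (T ^ n - 1) * uu r = SU r \<and>
            (T ^ n - 1) * vv r = SV r))"
    using C1 C2 recs sums by blast
  show ?thesis using main unfolding Let_def n_def[symmetric] k_def[symmetric]
      conds_def Uf_def Vf_def SU_def SV_def U_def V_def al_def be_def uu_def vv_def ps_def T_def
    by simp
qed
end
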